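(* Let $\mathbb{M}\subset\mathbb{T}^d$ be Lebesgue measurable. The set of vectors $\mathbf{a}\in\mathbb{R}^d$ generating an irrelevant direction (together with $\mathbf{0}$) is a linear subspace of $\mathbb{R}^d$. Moreover, if $0<|\mathbb{M}|<|\mathbb{T}^d|$, then at least one standard unit vector $\mathbf{e}_i$ ($1\le i\le d$) generates a relevant direction.
   Context: $\mathbb{T}^d=(\mathbb{R}/2\pi\mathbb{Z})^d$ with Lebesgue measure $|\cdot|$, $|\mathbb{T}^d|=(2\pi)^d$. For $\mathbf{a}\in\mathbb{R}^d$, $\mathbb{M}+\mathbf{a}$ is the translate of $\mathbb{M}$ (mod $2\pi$ in each coordinate), and $\Lambda_{\mathbb{M}}(\mathbf{a})=|\mathbb{M}\setminus(\mathbb{M}+\mathbf{a})|$. A vector $\mathbf{a}\in\mathbb{R}^d$ generates an irrelevant direction (with respect to $\mathbb{M}$) if $\Lambda_{\mathbb{M}}(\kappa\mathbf{a})=0$ for all $\kappa\in\mathbb{R}$; otherwise it generates a relevant direction. $\mathbf{e}_i$ denotes the $i$-th standard unit vector of $\mathbb{R}^d$. *)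

theory Defs
  imports "HOL-Analysis.Analysis"
begin

text \<open>The torus T^d = (R/2 pi Z)^d is represented by the fundamental domain
  [0, 2 pi)^d in R^d, with Lebesgue measure.\<close>

definition torus :: "(real ^ 'n) set" where
  "torus = {x. \<forall>i. 0 \<le> x $ i \<and> x $ i < 2 * pi}"

definition tmod :: "real ^ 'n \<Rightarrow> real ^ 'n" where
  "tmod x = (\<chi> i. x $ i - 2 * pi * of_int \<lfloor>x $ i / (2 * pi)\<rfloor>)"

definition ttranslate :: "(real ^ 'n) set \<Rightarrow> real ^ 'n \<Rightarrow> (real ^ 'n) set" where
  "ttranslate M a = (\<lambda>x. tmod (x + a)) ` M"

definition Lambda :: "(real ^ 'n) set \<Rightarrow> real ^ 'n \<Rightarrow> real" where
  "Lambda M a = measure lebesgue (M - ttranslate M a)"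

definition irrelevant_dir :: "(real ^ 'n) set \<Rightarrow> real ^ 'n \<Rightarrow> bool" where
  "irrelevant_dir M a \<longleftrightarrow> (\<forall>\<kappa>::real. Lambda M (\<kappa> *\<^sub>R a) = 0)"

end

theory Submission imports Defs begin

definition tm :: "real \<Rightarrow> real" where
  "tm r = r - 2 * pi * of_int \<lfloor>r / (2 * pi)\<rfloor>"

lemma tm_shift: "tm (r + 2 * pi * of_int j) = tm r"
proof -
  have "(r + 2 * pi * of_int j) / (2 * pi) = r / (2*pi) + of_int j"
    by (simp add: field_simps)
  then show ?thesis unfolding tm_def by (simp add: algebra_simps)
qed

lemma tm_range: "0 \<le> tm r \<and> tm r < 2 * pi"
proof -
  have p: "2 * pi > 0" by simp
  have a: "of_int \<lfloor>r / (2 * pi)\<rfloor> * (2*pi) \<le> r" by (rule floor_divide_lower[OF p])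
  have b: "r < (of_int \<lfloor>r / (2 * pi)\<rfloor> + 1) * (2*pi)" by (rule floor_divide_upper[OF p])
  show ?thesis using a b unfolding tm_def by (simp add: algebra_simps)
qed

lemma tm_id: "0 \<le> r \<Longrightarrow> r < 2 * pi \<Longrightarrow> tm r = r"
proof -
  assume "0 \<le> r" "r < 2 * pi"
  then have "\<lfloor>r / (2 * pi)\<rfloor> = 0" by (simp add: floor_eq_iff)
  then show ?thesis unfolding tm_def by simp
qed

lemma tmod_comp: "tmod x $ i = tm (x $ i)"
  unfolding tmod_def tm_def by simp

definition K :: "(real ^ 'n) set" where
  "K = {d. \<forall>i. \<exists>z::int. d $ i = 2 * pi * of_int z}"

lemma countable_K: "countable (K :: (real ^ 'n) set)"
proof -
  have "K \<subseteq> range (\<lambda>f::'n \<Rightarrow> int. \<chi> i. 2 * pi * of_int (f i))"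
  proof
    fix k :: "real ^ 'n" assume "k \<in> K"
    then have "\<forall>i. \<exists>z. k $ i = 2 * pi * of_int z" unfolding K_def by auto
    from choice[OF this] obtain f where "\<forall>i. k $ i = 2 * pi * of_int (f i)" by blast
    then have "k = (\<chi> i. 2 * pi * of_int (f i))" by (simp add: vec_eq_iff)
    then show "k \<in> range (\<lambda>f::'n \<Rightarrow> int. \<chi> i. 2 * pi * of_int (f i))" by blast
  qed
  then show ?thesis by (rule countable_subset) simp
qed

lemma tmod_shift:
  assumes "k \<in> K" shows "tmod (x + k) = tmod x"
  unfolding vec_eq_iff tmod_comp
proof
  fix i
  obtain z where "k $ i = 2 * pi * of_int z" using assms unfolding K_def by auto
  then show "tm ((x + k) $ i) = tm (x $ i)" by (simp add: tm_shift)
qed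

lemma K_uminus: assumes k: "k \<in> K" shows "-k \<in> K"
  unfolding K_def mem_Collect_eq
  proof
    fix i
    obtain z where "k $ i = 2 * pi * of_int z" using k unfolding K_def by auto
    then have "(-k) $ i = 2 * pi * of_int (-z)" by simp
    then show "\<exists>z::int. (-k) $ i = 2 * pi * of_int z" by blast
  qed

lemma tmod_decomp: fixes x :: "real ^ 'n" shows "\<exists>k\<in>K. x = tmod x + k"
proof
  show "(\<chi> i. 2 * pi * of_int \<lfloor>x $ i / (2 * pi)\<rfloor>) \<in> (K :: (real ^ 'n) set)" unfolding K_def by auto
  show "x = tmod x + (\<chi> i. 2 * pi * of_int \<lfloor>x $ i / (2 * pi)\<rfloor>)"
    by (simp add: vec_eq_iff tmod_def)
qed

lemma tmod_torus: "tmod x \<in> torus"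
  unfolding torus_def by (simp add: tmod_comp tm_range)

lemma tmod_id: "x \<in> torus \<Longrightarrow> tmod x = x"
  unfolding torus_def by (simp add: vec_eq_iff tmod_comp tm_id)

lemma tmod_tmod_add: "tmod (tmod x + c) = tmod (x + c)"
proof -
  obtain k where k: "k \<in> K" "x = tmod x + k" using tmod_decomp by blast
  have e: "x + c = (tmod x + c) + k" using k(2) by (simp add: algebra_simps)
  have "tmod (x + c) = tmod ((tmod x + c) + k)" by (simp only: e)
  also have "\<dots> = tmod (tmod x + c)" by (rule tmod_shift[OF k(1)])
  finally show ?thesis by simp
qed

definition PP :: "(real ^ 'n) set \<Rightarrow> (real ^ 'n) set" where
  "PP M = {x. tmod x \<in> M}"

lemma ttranslate_mem:
  assumes "M \<subseteq> torus" "y \<in> torus"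
  shows "y \<in> ttranslate M c \<longleftrightarrow> y - c \<in> PP M"
proof
  assume "y \<in> ttranslate M c"
  then obtain x where x: "x \<in> M" "y = tmod (x + c)" unfolding ttranslate_def by auto
  have "tmod (y - c) = tmod (x + c - c)" using x(2) tmod_tmod_add[of "x + c" "-c"] by simp
  also have "\<dots> = x" using x(1) assms(1) tmod_id by auto
  finally show "y - c \<in> PP M" unfolding PP_def using x(1) by simp
next
  assume "y - c \<in> PP M"
  then have m: "tmod (y - c) \<in> M" unfolding PP_def by simp
  have "tmod (tmod (y - c) + c) = tmod y" using tmod_tmod_add[of "y - c" c] by simp
  also have "\<dots> = y" using assms(2) tmod_id by auto
  finally have "y = tmod (tmod (y - c) + c)" by simp
  then show "y \<in> ttranslate M c" unfolding ttranslate_def using m by (rule image_eqI)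
qed

lemma trans_mem: fixes c :: "'a::ab_group_add" shows "y \<in> (+) c ` S \<longleftrightarrow> y - c \<in> S"
proof
  assume "y - c \<in> S" then show "y \<in> (+) c ` S" by (rule rev_image_eqI) (subst add.commute, simp)
qed auto

lemma diff_eq:
  assumes "M \<subseteq> torus"
  shows "M - ttranslate M c = M - (+) c ` PP M"
  using assms ttranslate_mem[OF assms] trans_mem by blast

lemma PP_union: assumes "M \<subseteq> torus" shows "PP M = (\<Union>k\<in>K. (+) k ` M)"
proof (intro set_eqI iffI)
  fix x assume "x \<in> PP M"
  then have "tmod x \<in> M" unfolding PP_def by simp
  moreover obtain k where "k \<in> K" "x = tmod x + k" using tmod_decomp by blast
  moreover have "x - k = tmod x" using \<open>x = tmod x + k\<close> by (simp add: algebra_simps)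
  ultimately have "x \<in> (+) k ` M" unfolding trans_mem by simp
  then show "x \<in> (\<Union>k\<in>K. (+) k ` M)" using \<open>k \<in> K\<close> by blast
next
  fix x assume "x \<in> (\<Union>k\<in>K. (+) k ` M)"
  then obtain k m where "k \<in> K" "m \<in> M" "x = k + m" by auto
  moreover have "tmod m = m" using assms \<open>m \<in> M\<close> tmod_id by blast
  ultimately show "x \<in> PP M" unfolding PP_def using tmod_shift[of k m]
    by (simp add: add.commute)
qed

lemma PP_shift: "k \<in> K \<Longrightarrow> x + k \<in> PP M \<longleftrightarrow> x \<in> PP M"
  unfolding PP_def by (simp add: tmod_shift)

lemma PP_sets: assumes "M \<subseteq> torus" "M \<in> sets lebesgue" shows "PP M \<in> sets lebesgue"
proof -
  have "(\<Union>k\<in>K. (+) k ` M) \<in> sets lebesgue"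
    by (rule sets.countable_UN''[OF countable_K]) (rule lebesgue_sets_translation[OF assms(2)])
  then show ?thesis using PP_union[OF assms(1)] by simp
qed


lemma torus_bounded: "bounded (torus :: (real ^ 'n) set)"
proof -
  have "torus \<subseteq> cbox (0::real^'n) (\<chi> i. 2 * pi)"
    unfolding torus_def by (auto simp: mem_box_cart less_imp_le)
  then show ?thesis using bounded_cbox bounded_subset by blast
qed

lemma Lambda_iff:
  assumes "M \<subseteq> torus" "M \<in> sets lebesgue"
  shows "Lambda M c = 0 \<longleftrightarrow> negligible (M - (+) c ` PP M)"
proof -
  have "M - (+) c ` PP M \<in> sets lebesgue"
    using assms PP_sets lebesgue_sets_translation by blast
  moreover have "bounded (M - (+) c ` PP M)"
    using assms(1) torus_bounded bounded_subset by blast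
  ultimately have "M - (+) c ` PP M \<in> lmeasurable"
    using bounded_set_imp_lmeasurable by blast
  then show ?thesis unfolding Lambda_def diff_eq[OF assms(1)]
    using negligible_iff_measure0 by metis
qed

lemma M_sub_PP: assumes "M \<subseteq> torus" shows "M \<subseteq> PP M"
proof
  fix x assume "x \<in> M"
  moreover then have "tmod x = x" using assms tmod_id by blast
  ultimately show "x \<in> PP M" unfolding PP_def by simp
qed

definition NG :: "(real ^ 'n) set \<Rightarrow> real ^ 'n \<Rightarrow> bool" where
  "NG M c \<longleftrightarrow> negligible (PP M - (+) c ` PP M)"

lemma NG_iff:
  assumes "M \<subseteq> torus"
  shows "negligible (M - (+) c ` PP M) \<longleftrightarrow> NG M c"
proof
  assume "NG M c"
  then show "negligible (M - (+) c ` PP M)" unfolding NG_def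
    using M_sub_PP[OF assms] negligible_subset by (metis Diff_mono order_refl)
next
  assume n: "negligible (M - (+) c ` PP M)"
  have "PP M - (+) c ` PP M \<subseteq> (\<Union>k\<in>K. (+) k ` (M - (+) c ` PP M))"
  proof
    fix x assume x: "x \<in> PP M - (+) c ` PP M"
    then obtain k m where km: "k \<in> K" "m \<in> M" "x = k + m"
      using PP_union[OF assms] by blast
    have e: "x - c = (m - c) + k" using km(3) by (simp add: algebra_simps)
    have "x - c \<notin> PP M" using x by (simp add: trans_mem)
    then have "(m - c) + k \<notin> PP M" unfolding e .
    then have "m - c \<notin> PP M" using PP_shift[OF km(1), of "m - c" M] by simp
    then have "m \<in> M - (+) c ` PP M" using km(2) by (simp add: trans_mem)
    then show "x \<in> (\<Union>k\<in>K. (+) k ` (M - (+) c ` PP M))" using km by blast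
  qed
  moreover have "negligible (\<Union>k\<in>K. (+) k ` (M - (+) c ` PP M))"
    by (rule negligible_countable_Union) (auto intro: countable_K negligible_translation n)
  ultimately show "NG M c" unfolding NG_def using negligible_subset by blast
qed

lemma NG_add: "NG M u \<Longrightarrow> NG M v \<Longrightarrow> NG M (u + v)"
proof -
  assume u: "NG M u" and v: "NG M v"
  let ?P = "PP M"
  have "?P - (+) (u + v) ` ?P \<subseteq> (?P - (+) u ` ?P) \<union> (+) u ` (?P - (+) v ` ?P)"
    by (auto simp: trans_mem algebra_simps)
  moreover have "negligible ((?P - (+) u ` ?P) \<union> (+) u ` (?P - (+) v ` ?P))"
    using u v unfolding NG_def by (intro negligible_Un negligible_translation)
  ultimately show ?thesis unfolding NG_def using negligible_subset by blast
qed

lemma NG_0: "NG M 0"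
  unfolding NG_def by simp

lemma irr_iff:
  assumes "M \<subseteq> torus" "M \<in> sets lebesgue"
  shows "irrelevant_dir M a \<longleftrightarrow> (\<forall>k::real. NG M (k *\<^sub>R a))"
  unfolding irrelevant_dir_def Lambda_iff[OF assms] NG_iff[OF assms(1)] ..

lemma subspace_irr:
  assumes "M \<subseteq> torus" "M \<in> sets lebesgue"
  shows "subspace ({a. irrelevant_dir M a} \<union> {0})"
  unfolding subspace_def
proof (intro conjI ballI allI)
  show "0 \<in> {a. irrelevant_dir M a} \<union> {0}" by simp
next
  fix x y assume x: "x \<in> {a. irrelevant_dir M a} \<union> {0}" and y: "y \<in> {a. irrelevant_dir M a} \<union> {0}"
  show "x + y \<in> {a. irrelevant_dir M a} \<union> {0}"
  proof (cases "x = 0 \<or> y = 0")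
    case True then show ?thesis using x y by auto
  next
    case False
    then have "\<forall>k::real. NG M (k *\<^sub>R x)" "\<forall>k::real. NG M (k *\<^sub>R y)"
      using x y irr_iff[OF assms] by auto
    then have "\<forall>k::real. NG M (k *\<^sub>R (x + y))"
      by (simp add: scaleR_right_distrib NG_add)
    then show ?thesis using irr_iff[OF assms] by auto
  qed
next
  fix c :: real and x assume x: "x \<in> {a. irrelevant_dir M a} \<union> {0}"
  show "c *\<^sub>R x \<in> {a. irrelevant_dir M a} \<union> {0}"
  proof (cases "x = 0")
    case True then show ?thesis by simp
  next
    case False
    then have "\<forall>k::real. NG M (k *\<^sub>R x)" using x irr_iff[OF assms] by auto
    then have "\<forall>k::real. NG M (k *\<^sub>R (c *\<^sub>R x))" by simp
    then show ?thesis using irr_iff[OF assms] by auto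
  qed
qed


lemma inv_null:
  fixes P :: "(real^'n) set"
  assumes P: "P \<in> sets lebesgue" and inv: "\<forall>c. negligible (P - (+) c ` P)"
  shows "negligible P \<or> negligible (- P)"
proof -
  obtain B N N' where BN: "P = B \<union> N" "N \<subseteq> N'" "N' \<in> null_sets lborel" "B \<in> sets lborel"
    using sets_completionE[OF P] by metis
  have Bb[measurable]: "B \<in> sets borel" using BN(4) by simp
  have Bc[measurable]: "-B \<in> sets borel"
    using Bb by (metis Compl_eq_Diff_UNIV sets.compl_sets space_borel)
  have negN: "negligible N'" using BN(3) negligible_iff_null_sets null_sets_completionI by blast
  define E where "E c = {x. x \<in> B \<and> x + c \<notin> B}" for c :: "real^'n"
  have pm: "(\<lambda>x. x + c) \<in> borel_measurable borel" for c :: "real^'n"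
    by (intro borel_measurable_add borel_measurable_const measurable_ident_sets refl)
  have Esets: "E c \<in> sets lborel" for c
  proof -
    have "E c = B \<inter> ((\<lambda>x. x + c) -` (-B) \<inter> space borel)" unfolding E_def space_borel by blast
    moreover have "(\<lambda>x. x + c) -` (-B) \<inter> space borel \<in> sets borel"
      by (rule measurable_sets[OF pm Bc])
    ultimately have "E c \<in> sets borel" using Bb by (metis sets.Int)
    then show ?thesis by (simp only: sets_lborel)
  qed
  have Enull: "emeasure lborel (E c) = 0" for c
  proof -
    have "E c \<subseteq> (P - (+) (-c) ` P) \<union> (+) (-c) ` N'"
    proof
      fix x assume "x \<in> E c"
      then have x: "x \<in> B" "x + c \<notin> B" unfolding E_def by auto
      show "x \<in> (P - (+) (-c) ` P) \<union> (+) (-c) ` N'"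
      proof (cases "x + c \<in> P")
        case True
        then have "x + c \<in> N'" using x BN(1,2) by blast
        then have "x \<in> (+) (-c) ` N'" unfolding trans_mem by simp
        then show ?thesis by blast
      next
        case False
        then have "x \<notin> (+) (-c) ` P" unfolding trans_mem by simp
        moreover have "x \<in> P" using x BN(1) by blast
        ultimately show ?thesis by blast
      qed
    qed
    moreover have "negligible ((P - (+) (-c) ` P) \<union> (+) (-c) ` N')"
      apply (rule negligible_Un)
       apply (rule inv[rule_format])
      apply (rule negligible_translation[OF negN])
      done
    ultimately have "negligible (E c)" by (rule negligible_subset[rotated])
    then have "E c \<in> null_sets lebesgue" using negligible_iff_null_sets by blast
    then have "E c \<in> null_sets lborel" using null_sets_completion_iff[OF Esets] by blast
    then show ?thesis by auto
  qed
  let ?f = "\<lambda>x c. indicator B x * indicator (-B) (x + c) :: ennreal"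
  have meas: "case_prod ?f \<in> borel_measurable (lborel \<Otimes>\<^sub>M lborel)"
  proof -
    have hf: "fst \<in> borel_measurable (lborel \<Otimes>\<^sub>M (lborel :: (real^'n) measure))"
      by measurable
    have hs: "snd \<in> borel_measurable (lborel \<Otimes>\<^sub>M (lborel :: (real^'n) measure))"
      by measurable
    have ha: "(\<lambda>p. fst p + snd p) \<in> borel_measurable (lborel \<Otimes>\<^sub>M (lborel :: (real^'n) measure))"
      by (rule borel_measurable_add[OF hf hs])
    have h1: "(\<lambda>p. indicator B (fst p) :: ennreal) \<in> borel_measurable (lborel \<Otimes>\<^sub>M (lborel :: (real^'n) measure))"
      by (rule measurable_compose[OF hf borel_measurable_indicator[OF Bb]])
    have h2: "(\<lambda>p. indicator (-B) (fst p + snd p) :: ennreal) \<in> borel_measurable (lborel \<Otimes>\<^sub>M (lborel :: (real^'n) measure))"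
      by (rule measurable_compose[OF ha borel_measurable_indicator[OF Bc]])
    have "(\<lambda>p. indicator B (fst p) * indicator (-B) (fst p + snd p) :: ennreal) \<in> borel_measurable (lborel \<Otimes>\<^sub>M (lborel :: (real^'n) measure))"
      by (rule borel_measurable_times_ennreal[OF h1 h2])
    then show ?thesis by (simp add: case_prod_beta')
  qed
  have eq: "(\<integral>\<^sup>+c. (\<integral>\<^sup>+x. ?f x c \<partial>lborel) \<partial>lborel) = (\<integral>\<^sup>+x. (\<integral>\<^sup>+c. ?f x c \<partial>lborel) \<partial>lborel)"
    by (rule lborel_pair.Fubini'[OF meas])
  have i1: "(\<integral>\<^sup>+x. ?f x c \<partial>lborel) = 0" for c
  proof -
    have "(\<lambda>x. ?f x c) = indicator (E c)" by (auto simp: E_def indicator_def fun_eq_iff)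
    then show ?thesis using Enull Esets by simp
  qed
  have i2: "(\<integral>\<^sup>+c. ?f x c \<partial>lborel) = indicator B x * emeasure lborel (-B)" for x
  proof -
    have 1: "(\<integral>\<^sup>+c. ?f x c \<partial>lborel) = indicator B x * (\<integral>\<^sup>+c. indicator (-B) (x + c) \<partial>lborel)"
    proof (rule nn_integral_cmult)
      have pm2: "(\<lambda>c. x + c) \<in> borel_measurable borel"
        by (intro borel_measurable_add borel_measurable_const measurable_ident_sets refl)
      have "(\<lambda>c. indicator (-B) (x + c) :: ennreal) \<in> borel_measurable borel"
        by (rule measurable_compose[OF pm2 borel_measurable_indicator[OF Bc]])
      then show "(\<lambda>c. indicator (-B) (x + c) :: ennreal) \<in> borel_measurable lborel"
        by (simp only: measurable_lborel2)
    qed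
    have 2: "(\<integral>\<^sup>+c. indicator (-B) (x + c) \<partial>lborel) = (\<integral>\<^sup>+y. indicator (-B) y \<partial>distr lborel borel ((+) x))"
      by (subst nn_integral_distr) auto
    have 3: "(\<integral>\<^sup>+y. indicator (-B) y \<partial>distr lborel borel ((+) x)) = emeasure lborel (-B)"
      using Bc by (simp add: lborel_distr_plus)
    show ?thesis using 1 2 3 by simp
  qed
  have "(\<integral>\<^sup>+x. indicator B x * emeasure lborel (-B) \<partial>lborel) = emeasure lborel B * emeasure lborel (-B)"
    using Bb by (subst nn_integral_multc) auto
  then have "emeasure lborel B * emeasure lborel (-B) = 0"
    using eq i1 i2 by simp
  then have "emeasure lborel B = 0 \<or> emeasure lborel (-B) = 0" by simp
  then show ?thesis
  proof
    assume "emeasure lborel B = 0"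
    then have "B \<in> null_sets lborel" using Bb by (intro null_setsI) simp_all
    then have "B \<in> null_sets lebesgue" by (rule null_sets_completionI)
    then have "negligible B" by (simp only: negligible_iff_null_sets)
    then have "negligible (B \<union> N')" using negN by (rule negligible_Un)
    moreover have "P \<subseteq> B \<union> N'" using BN(1,2) by blast
    ultimately show ?thesis using negligible_subset by blast
  next
    assume "emeasure lborel (-B) = 0"
    then have "-B \<in> null_sets lborel" using Bc by (intro null_setsI) simp_all
    then have "-B \<in> null_sets lebesgue" by (rule null_sets_completionI)
    then have "negligible (-B)" by (simp only: negligible_iff_null_sets)
    moreover have "-P \<subseteq> -B" using BN(1) by blast
    ultimately show ?thesis using negligible_subset by blast
  qed
qed


lemma torus_cbox:
  "torus \<subseteq> cbox (0::real^'n) (\<chi> i. 2 * pi)"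
  "box (0::real^'n) (\<chi> i. 2 * pi) \<subseteq> torus"
  unfolding torus_def by (auto simp: mem_box_cart less_imp_le)

lemma measure_cbox_torus:
  fixes b :: "real^'n"
  assumes b: "b = (\<chi> i. 2 * pi)"
  shows "measure lebesgue (cbox 0 b) = (2 * pi) ^ CARD('n)"
proof -
  have "0 \<in> cbox (0::real^'n) b" using b by (simp add: mem_box_cart)
  then have ne: "cbox (0::real^'n) b \<noteq> {}" by blast
  have "measure lebesgue (cbox (0::real^'n) b) = measure lborel (cbox (0::real^'n) b)"
    by (rule measure_completion) simp
  also have "\<dots> = (\<Prod>i\<in>(UNIV::'n set). 2 * pi)" using content_cbox_cart[OF ne] b by simp
  also have "\<dots> = (2 * pi) ^ CARD('n)" by simp
  finally show ?thesis .
qed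

theorem mainTheorem4:
  fixes M :: "(real ^ 'n) set"
  assumes "M \<subseteq> torus" and "M \<in> sets lebesgue"
  shows "subspace ({a. irrelevant_dir M a} \<union> {0})
     \<and> (0 < measure lebesgue M \<and> measure lebesgue M < (2 * pi) ^ CARD('n)
          \<longrightarrow> (\<exists>i. \<not> irrelevant_dir M (axis i 1)))"
proof
  show sub: "subspace ({a. irrelevant_dir M a} \<union> {0})" by (rule subspace_irr[OF assms])
  show "0 < measure lebesgue M \<and> measure lebesgue M < (2 * pi) ^ CARD('n)
          \<longrightarrow> (\<exists>i. \<not> irrelevant_dir M (axis i 1))"
  proof (intro impI, rule ccontr)
    assume h: "0 < measure lebesgue M \<and> measure lebesgue M < (2 * pi) ^ CARD('n)"
      and nr: "\<not> (\<exists>i. \<not> irrelevant_dir M (axis i 1))"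
    then have ax: "\<forall>i. irrelevant_dir M (axis i 1)" by blast
    have "Basis \<subseteq> {a. irrelevant_dir M a} \<union> {0}"
      unfolding Basis_vec_def using ax by auto
    then have "span Basis \<subseteq> {a. irrelevant_dir M a} \<union> {0}"
      by (rule span_minimal[OF _ sub])
    then have all: "\<forall>c. c \<in> {a. irrelevant_dir M a} \<union> {0}" using span_Basis by blast
    have ng: "NG M c" for c
    proof (cases "c = 0")
      case True then show ?thesis by (simp add: NG_0)
    next
      case False
      then have "irrelevant_dir M c" using all by auto
      then have "NG M (1 *\<^sub>R c)" using irr_iff[OF assms] by blast
      then show ?thesis by simp
    qed
    have "negligible (PP M) \<or> negligible (- PP M)"
      by (rule inv_null[OF PP_sets[OF assms]]) (use ng in \<open>simp add: NG_def\<close>)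
    then show False
    proof
      assume "negligible (PP M)"
      then have "negligible M" using M_sub_PP[OF assms(1)] negligible_subset by blast
      then have "measure lebesgue M = 0" by (rule negligible_imp_measure0)
      then show False using h by simp
    next
      assume n: "negligible (- PP M)"
      have "torus - M \<subseteq> - PP M"
      proof
        fix x assume x: "x \<in> torus - M"
        then have "tmod x = x" using tmod_id by blast
        then show "x \<in> - PP M" unfolding PP_def using x by simp
      qed
      then have n1: "negligible (torus - M)" using n negligible_subset by blast
      have "cbox (0::real^'n) (\<chi> i. 2 * pi) - M \<subseteq> (cbox 0 (\<chi> i. 2 * pi) - box 0 (\<chi> i. 2 * pi)) \<union> (torus - M)"
        using torus_cbox by blast
      moreover have "negligible ((cbox (0::real^'n) (\<chi> i. 2 * pi) - box 0 (\<chi> i. 2 * pi)) \<union> (torus - M))"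
        by (intro negligible_Un n1 negligible_frontier_interval)
      ultimately have "negligible (cbox (0::real^'n) (\<chi> i. 2 * pi) - M)" using negligible_subset by blast
      moreover have "M - cbox (0::real^'n) (\<chi> i. 2 * pi) = {}" using assms(1) torus_cbox by blast
      ultimately have "negligible ((cbox (0::real^'n) (\<chi> i. 2 * pi) - M) \<union> (M - cbox 0 (\<chi> i. 2 * pi)))"
        by simp
      then have "measure lebesgue M = measure lebesgue (cbox (0::real^'n) (\<chi> i. 2 * pi))"
        by (rule measure_negligible_symdiff[rotated]) simp
      moreover have "measure lebesgue (cbox (0::real^'n) (\<chi> i. 2 * pi)) = (2 * pi) ^ CARD('n)"
        by (rule measure_cbox_torus) simp
      ultimately show False using h by simp
    qed
  qed
qed

end
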